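(* Let $p_1,p_2,q$ be non-negative integers, $k$ an integer and $x_1,x_2\in\mathbb{C}$. Define rational functions $\mathcal{R}_{\mu,k}(y)$ for integers $\mu\ge -1$ by $\mathcal{R}_{-1,k}(y)=-1$ and, for $\mu\ge 0$, $$\mathcal{R}_{\mu,k}(y)=y(y+\mu+2)^{k}\mathcal{R}_{\mu-1,k}(y)-(y+1)^{k+1}\mathcal{R}_{\mu-1,k}(y+1).$$ Then $$\sum_{l=0}^{q}\binom{q}{l}(-x_1)^{q-l}B^{(k)}_{p_1+l,p_2}(x_1,x_2)=\sum_{l=0}^{q}\binom{q}{l}(-x_2)^{q-l}B^{(k)}_{p_1,p_2+l}(x_1,x_2)=-\sum_{l=0}^{p_1+p_2}S_{1,x_1}^{1,x_2,p_2}(p_1,l)\,\frac{(-1)^{l}\,l!\,\mathcal{R}_{q-1,k}(l)}{\left(\prod_{i=1}^{q+1}(l+i)\right)^{k}}.$$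
   Context: For non-negative integers $p_1,p_2,l$ and $x_1,x_2\in\mathbb{C}$, the generalized Stirling numbers are $$S_{1,x_1}^{1,x_2,p_2}(p_1,l)=\frac{1}{l!}\sum_{j=0}^{l}(-1)^{j}\binom{l}{j}(l-j+x_1)^{p_1}(l-j+x_2)^{p_2}.$$ For an integer $k$, the bi-variate poly-Bernoulli polynomial is $$B^{(k)}_{p_1,p_2}(x_1,x_2)=\sum_{l=0}^{p_1+p_2}S_{1,x_1}^{1,x_2,p_2}(p_1,l)\frac{(-1)^{l}\,l!}{(l+1)^{k}}.$$ *)

theory Defs
  imports Complex_Main
begin

definition gen_stirling :: "complex \<Rightarrow> complex \<Rightarrow> nat \<Rightarrow> nat \<Rightarrow> nat \<Rightarrow> complex" where
  "gen_stirling x1 x2 p2 p1 l =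
     (1 / of_nat (fact l)) *
     (\<Sum>j=0..l. (-1)^j * of_nat (l choose j) *
        (of_nat (l - j) + x1)^p1 * (of_nat (l - j) + x2)^p2)"

definition bipoly_bernoulli :: "int \<Rightarrow> nat \<Rightarrow> nat \<Rightarrow> complex \<Rightarrow> complex \<Rightarrow> complex" where
  "bipoly_bernoulli k p1 p2 x1 x2 =
     (\<Sum>l=0..p1+p2. gen_stirling x1 x2 p2 p1 l *
        ((-1)^l * of_nat (fact l) / (of_nat (l + 1)) powi k))"

text \<open>The rational functions R_{mu,k}, shifted by one: Rfun k m = R_{m-1,k}, so
  Rfun k 0 = R_{-1,k} = -1 and Rfun k (Suc m) = R_{m,k}.\<close>
fun Rfun :: "int \<Rightarrow> nat \<Rightarrow> complex \<Rightarrow> complex" where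
  "Rfun k 0 y = -1"
| "Rfun k (Suc m) y =
     y * (y + of_nat m + 2) powi k * Rfun k m y - (y + 1) powi (k + 1) * Rfun k m (y + 1)"

end

theory Submission
  imports Defs
begin

definition E :: "(nat \<Rightarrow> complex) \<Rightarrow> nat \<Rightarrow> complex" where
  "E h n = (\<Sum>j\<le>n. (-1)^j * of_nat (n choose j) * h (n-j))"

lemma E_0[simp]: "E h 0 = h 0" by (simp add: E_def)

lemma E_rec: "E h (Suc n) = E (\<lambda>t. h (Suc t)) n - E h n"
proof -
  have A: "E h (Suc n) = h (Suc n) - E h n
      - (\<Sum>i\<le>n. (-1)^i * of_nat (n choose Suc i) * h (n-i))"
  proof -
    have "E h (Suc n) = h (Suc n) + (\<Sum>i\<le>n. (-1)^(Suc i) * of_nat (Suc n choose Suc i) * h (Suc n - Suc i))"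
      unfolding E_def by (subst sum.atMost_Suc_shift) simp
    also have "\<dots> = h (Suc n) + (\<Sum>i\<le>n. - ((-1)^i * of_nat (n choose i) * h (n-i)) - (-1)^i * of_nat (n choose Suc i) * h (n-i))"
      by (intro arg_cong2[where f="(+)"] refl sum.cong) (simp_all add: algebra_simps)
    also have "\<dots> = h (Suc n) - E h n - (\<Sum>i\<le>n. (-1)^i * of_nat (n choose Suc i) * h (n-i))"
      unfolding E_def by (simp add: sum_subtractf sum_negf)
    finally show ?thesis .
  qed
  have B: "E (\<lambda>t. h (Suc t)) n = h (Suc n) - (\<Sum>i\<le>n. (-1)^i * of_nat (n choose Suc i) * h (n-i))"
  proof (cases n)
    case 0 then show ?thesis by (simp add: E_def)
  next
    case (Suc n')
    have "(\<Sum>i\<le>n. (-1)^i * of_nat (n choose Suc i) * h (n-i))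
        = (\<Sum>i\<le>n'. (-1)^i * of_nat (Suc n' choose Suc i) * h (Suc (Suc n' - Suc i)))"
      unfolding Suc atMost_Suc by (simp add: Suc_diff_le del: binomial_Suc_Suc)
    moreover have "E (\<lambda>t. h (Suc t)) n = h (Suc n) + (\<Sum>i\<le>n'. (-1)^(Suc i) * of_nat (Suc n' choose Suc i) * h (Suc (Suc n' - Suc i)))"
      unfolding E_def Suc by (subst sum.atMost_Suc_shift) simp
    ultimately show ?thesis by (simp add: sum_negf[symmetric] del: binomial_Suc_Suc)
  qed
  show ?thesis using A B by simp
qed

lemma E_add: "E (\<lambda>t. f t + g t) n = E f n + E g n"
  by (simp add: E_def algebra_simps sum.distrib)
lemma E_cmult: "E (\<lambda>t. c * f t) n = c * E f n"
  by (simp add: E_def algebra_simps sum_distrib_left)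
lemma E_sum: "finite A \<Longrightarrow> E (\<lambda>t. \<Sum>a\<in>A. F a t) n = (\<Sum>a\<in>A. E (F a) n)"
  by (induction A rule: finite_induct) (simp_all add: E_add, simp add: E_def)

lemma E_mult: "E (\<lambda>t. of_nat t * h t) (Suc m) = of_nat (Suc m) * E (\<lambda>t. h (Suc t)) m"
proof (induction m arbitrary: h)
  case 0
  then show ?case by (simp add: E_rec)
next
  case (Suc m)
  have eq: "(\<lambda>t. of_nat (Suc t) * h (Suc t)) = (\<lambda>t. of_nat t * h (Suc t) + h (Suc t))"
    by (auto simp: algebra_simps)
  have "E (\<lambda>t. of_nat t * h t) (Suc (Suc m)) =
      E (\<lambda>t. of_nat t * h (Suc t)) (Suc m) + E (\<lambda>t. h (Suc t)) (Suc m) - E (\<lambda>t. of_nat t * h t) (Suc m)"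
    by (subst E_rec) (simp add: eq E_add del: of_nat_Suc)
  also have "\<dots> = of_nat (Suc m) * E (\<lambda>t. h (Suc (Suc t))) m + E (\<lambda>t. h (Suc t)) (Suc m)
      - of_nat (Suc m) * E (\<lambda>t. h (Suc t)) m"
    using Suc.IH[of "\<lambda>t. h (Suc t)"] Suc.IH[of h] by simp
  also have "\<dots> = of_nat (Suc (Suc m)) * E (\<lambda>t. h (Suc t)) (Suc m)"
  proof -
    have e: "E (\<lambda>t. h (Suc (Suc t))) m = E (\<lambda>t. h (Suc t)) (Suc m) + E (\<lambda>t. h (Suc t)) m"
      using E_rec[of "\<lambda>t. h (Suc t)" m] by simp
    show ?thesis unfolding e by (simp add: algebra_simps)
  qed
  finally show ?case .
qed

inductive pd :: "nat \<Rightarrow> (nat \<Rightarrow> complex) \<Rightarrow> bool" where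
  pconst: "pd d (\<lambda>_. c)"
| pmult: "pd d h \<Longrightarrow> pd (Suc d) (\<lambda>t. (of_nat t + c) * h t)"
| padd: "pd d f \<Longrightarrow> pd d g \<Longrightarrow> pd d (\<lambda>t. f t + g t)"

lemma pd_mono: "pd d h \<Longrightarrow> d \<le> e \<Longrightarrow> pd e h"
proof (induction arbitrary: e rule: pd.induct)
  case (pconst d c) show ?case by (rule pd.pconst)
next
  case (pmult d h c)
  then obtain e' where "e = Suc e'" "d \<le> e'" by (cases e) auto
  then show ?case using pmult by (auto intro: pd.pmult)
next
  case (padd d f g) then show ?case by (auto intro: pd.padd)
qed

lemma pd_shift: "pd d h \<Longrightarrow> pd d (\<lambda>t. h (Suc t))"
proof (induction rule: pd.induct)
  case (pconst d c) show ?case by (rule pd.pconst)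
next
  case (pmult d h c)
  have "pd (Suc d) (\<lambda>t. (of_nat t + (c+1)) * h (Suc t))" by (rule pd.pmult[OF pmult.IH])
  then show ?case by (simp add: algebra_simps)
next
  case (padd d f g) then show ?case by (auto intro: pd.padd)
qed

lemma pd_zero_pt: "pd d h \<Longrightarrow> d = 0 \<Longrightarrow> h t = h 0"
  by (induction rule: pd.induct) auto

lemma pd_zero: "pd d h \<Longrightarrow> d = 0 \<Longrightarrow> h = (\<lambda>_. h 0)"
  using pd_zero_pt by blast

lemma pd_diff: "pd d h \<Longrightarrow> pd (d - 1) (\<lambda>t. h (Suc t) - h t)"
proof (induction rule: pd.induct)
  case (pconst d c) then show ?case using pd.pconst[of _ 0] by simp
next
  case (pmult d h c)
  show ?case
  proof (cases "d = 0")
    case True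
    then have "h = (\<lambda>_. h 0)" using pmult(1) pd_zero by blast
    have "(\<lambda>t. (of_nat (Suc t) + c) * h (Suc t) - (of_nat t + c) * h t) = (\<lambda>_. h 0)"
    proof
      fix t
      have "h (Suc t) = h 0" "h t = h 0" by (metis \<open>h = _\<close>)+
      then show "(of_nat (Suc t) + c) * h (Suc t) - (of_nat t + c) * h t = h 0"
        by (simp add: algebra_simps)
    qed
    then show ?thesis by (simp add: pd.pconst)
  next
    case False
    then have "pd d (\<lambda>t. (of_nat t + c) * (h (Suc t) - h t))"
      using pd.pmult[OF pmult(2), of c] by simp
    moreover have "pd d (\<lambda>t. h (Suc t))" using pmult(1) by (rule pd_shift)
    ultimately have "pd d (\<lambda>t. (of_nat t + c) * (h (Suc t) - h t) + h (Suc t))" by (rule pd.padd)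
    then show ?thesis by (simp add: algebra_simps)
  qed
next
  case (padd d f g)
  have "pd (d-1) (\<lambda>t. (f (Suc t) - f t) + (g (Suc t) - g t))" by (rule pd.padd[OF padd.IH])
  then show ?case by (simp add: algebra_simps)
qed

lemma E_diff: "E h (Suc n) = E (\<lambda>t. h (Suc t) - h t) n"
proof -
  have "E (\<lambda>t. h (Suc t) + (-1) * h t) n = E (\<lambda>t. h (Suc t)) n + (-1) * E h n"
    by (simp only: E_add E_cmult)
  then show ?thesis by (simp add: E_rec)
qed

lemma E_vanish: "pd d h \<Longrightarrow> d < n \<Longrightarrow> E h n = 0"
proof (induction n arbitrary: d h)
  case 0 then show ?case by simp
next
  case (Suc m)
  show ?case
  proof (cases "d = 0")
    case True
    then have "h = (\<lambda>_. h 0)" using Suc(2) pd_zero by blast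
    then have "(\<lambda>t. h (Suc t) - h t) = (\<lambda>t. 0 * h t)" by (metis diff_self mult_zero_left)
    then show ?thesis by (simp add: E_diff E_cmult del: mult_zero_left)
  next
    case False
    then show ?thesis using Suc.IH[OF pd_diff[OF Suc(2)]] Suc(3) by (simp add: E_diff)
  qed
qed

definition Tw :: "(nat \<Rightarrow> complex) \<Rightarrow> (nat \<Rightarrow> complex) \<Rightarrow> nat \<Rightarrow> complex" where
  "Tw w h N = (\<Sum>m\<le>N. E h m * (-1)^m * w m)"

lemma Tw_mult: "Tw w (\<lambda>t. of_nat t * h t) N =
   Tw (\<lambda>m. of_nat m * w m - of_nat (Suc m) * w (Suc m)) h N + of_nat (Suc N) * E h N * (-1)^N * w (Suc N)"
proof (induction N)
  case 0 then show ?case by (simp add: Tw_def)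
next
  case (Suc N)
  have e: "E (\<lambda>t. of_nat t * h t) (Suc N) = of_nat (Suc N) * (E h (Suc N) + E h N)"
    using E_mult[of h N] E_rec[of h N] by simp
  show ?case using Suc.IH unfolding Tw_def
    by (simp add: e algebra_simps del: of_nat_Suc)
qed

lemma Tw_ext: "pd d h \<Longrightarrow> d \<le> N \<Longrightarrow> Tw w h N = Tw w h (N + j)"
proof (induction j)
  case 0 then show ?case by simp
next
  case (Suc j)
  then show ?case using E_vanish[of d h "Suc (N+j)"] by (simp add: Tw_def)
qed

lemma Tw_sum: "finite A \<Longrightarrow> Tw w (\<lambda>t. \<Sum>a\<in>A. c a * F a t) N = (\<Sum>a\<in>A. c a * Tw w (F a) N)"
  unfolding Tw_def
  by (simp add: E_sum E_cmult sum_distrib_left sum_distrib_right mult.assoc sum.swap[of _ A])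

definition W :: "int \<Rightarrow> nat \<Rightarrow> nat \<Rightarrow> complex" where
  "W k q m = - Rfun k q (of_nat m) / (\<Prod>i=1..q+1. of_nat (m+i)) powi k"

lemma W_0: "W k 0 m = 1 / (of_nat (m+1)) powi k"
  by (simp add: W_def)

lemma alg_W: "(A::complex) \<noteq> 0 \<Longrightarrow> C \<noteq> 0 \<Longrightarrow> D \<noteq> 0 \<Longrightarrow>
   - (m * C * R) / (A * C) + (D * u * R1) / (D * Bp) = m * (- R / A) - u * (- R1 / Bp)"
  by (simp add: field_simps)

lemma split_div: "(X::complex) = Y1 \<Longrightarrow> X = Y2 \<Longrightarrow> -(a - b)/X = -a/Y1 + b/Y2"
  by (simp add: diff_divide_distrib)

lemma W_Suc: "W k (Suc q) m = of_nat m * W k q m - of_nat (Suc m) * W k q (Suc m)"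
proof -
  define P where "P m = (\<Prod>i=1..q+1. (of_nat (m+i) :: complex))" for m
  have Pnz: "P m \<noteq> 0" for m unfolding P_def
    by (simp only: prod_zero_iff[OF finite_atLeastAtMost] of_nat_eq_0_iff) auto
  have P1: "(\<Prod>i=1..Suc q+1. (of_nat (m+i) :: complex)) = P m * (of_nat m + of_nat q + 2)"
    unfolding P_def by (simp add: algebra_simps)
  have P2: "(\<Prod>i=1..Suc q+1. (of_nat (m+i) :: complex)) = (of_nat m + 1) * P (Suc m)"
  proof -
    have "(\<Prod>i=1..Suc q+1. (of_nat (m+i) :: complex)) = of_nat (m+1) * (\<Prod>i=Suc 1..Suc (q+1). (of_nat (m+i) :: complex))"
      by (subst prod.atLeast_Suc_atMost) simp_all
    also have "(\<Prod>i=Suc 1..Suc (q+1). (of_nat (m+i) :: complex)) = P (Suc m)"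
      unfolding P_def prod.shift_bounds_cl_Suc_ivl by simp
    finally show ?thesis by simp
  qed
  have a: "(of_nat m + of_nat q + 2 :: complex) \<noteq> 0"
  proof -
    have "(of_nat m + of_nat q + 2 :: complex) = of_nat (m+q+2)" by simp
    then show ?thesis by (simp only: of_nat_eq_0_iff)
  qed
  have b: "(of_nat m + 1 :: complex) \<noteq> 0"
  proof -
    have "(of_nat m + 1 :: complex) = of_nat (Suc m)" by simp
    then show ?thesis by (simp only: of_nat_eq_0_iff)
  qed
  have Pk1: "(\<Prod>i=1..Suc q+1. (of_nat (m+i) :: complex)) powi k = P m powi k * (of_nat m + of_nat q + 2) powi k"
    by (simp only: P1 power_int_mult_distrib)
  have Pk2: "(\<Prod>i=1..Suc q+1. (of_nat (m+i) :: complex)) powi k = (of_nat m + 1) powi k * P (Suc m) powi k"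
    by (simp only: P2 power_int_mult_distrib)
  have pk: "(of_nat m + 1 :: complex) powi (k+1) = (of_nat m + 1) powi k * (of_nat m + 1)"
    using b by (simp add: power_int_add)
  have nz1: "P m powi k \<noteq> 0" "(of_nat m + of_nat q + 2 :: complex) powi k \<noteq> 0"
     "(of_nat m + 1 :: complex) powi k \<noteq> 0"
    using Pnz a b by auto
  have R: "Rfun k (Suc q) (of_nat m) = of_nat m * (of_nat m + of_nat q + 2) powi k * Rfun k q (of_nat m)
      - (of_nat m + 1) powi k * (of_nat m + 1) * Rfun k q (of_nat m + 1)"
    by (simp add: pk)
  have "W k (Suc q) m = - (of_nat m * (of_nat m + of_nat q + 2) powi k * Rfun k q (of_nat m)) /
         (P m powi k * (of_nat m + of_nat q + 2) powi k)
       + ((of_nat m + 1) powi k * (of_nat m + 1) * Rfun k q (of_nat m + 1)) /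
         ((of_nat m + 1) powi k * P (Suc m) powi k)"
    unfolding W_def R by (rule split_div[OF Pk1 Pk2])
  also have "\<dots> = of_nat m * (- Rfun k q (of_nat m) / P m powi k) - (of_nat m + 1) * (- Rfun k q (of_nat m + 1) / P (Suc m) powi k)"
    by (rule alg_W) (use nz1 in auto)
  also have "\<dots> = of_nat m * W k q m - of_nat (Suc m) * W k q (Suc m)"
  proof -
    have e: "of_nat (Suc m) = (of_nat m + 1 :: complex)" by simp
    show ?thesis unfolding W_def P_def e ..
  qed
  finally show ?thesis .
qed

lemma key: "pd d h \<Longrightarrow> d + q \<le> N \<Longrightarrow> Tw (W k 0) (\<lambda>t. of_nat t ^ q * h t) N = Tw (W k q) h N"
proof (induction q arbitrary: d h)
  case 0 then show ?case by simp
next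
  case (Suc q)
  have pd1: "pd (Suc d) (\<lambda>t. of_nat t * h t)" using pd.pmult[OF Suc(2), of 0] by simp
  have "Tw (W k 0) (\<lambda>t. of_nat t ^ Suc q * h t) N = Tw (W k 0) (\<lambda>t. of_nat t ^ q * (of_nat t * h t)) N"
    by (simp add: mult_ac)
  also have "\<dots> = Tw (W k q) (\<lambda>t. of_nat t * h t) N" using Suc.IH[OF pd1] Suc(3) by simp
  also have "\<dots> = Tw (W k (Suc q)) h N"
  proof -
    have w: "(\<lambda>m. of_nat m * W k q m - of_nat (Suc m) * W k q (Suc m)) = W k (Suc q)"
      by (rule ext, rule W_Suc[symmetric])
    show ?thesis using E_vanish[OF Suc(2), of N] Suc(3) by (simp only: Tw_mult w) simp
  qed
  finally show ?case .
qed

lemma pd_pow: "pd d h \<Longrightarrow> pd (d + n) (\<lambda>t. (of_nat t + c)^n * h t)"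
proof (induction n)
  case 0 then show ?case by simp
next
  case (Suc n)
  have "pd (Suc (d+n)) (\<lambda>t. (of_nat t + c) * ((of_nat t + c)^n * h t))" by (rule pd.pmult[OF Suc.IH[OF Suc.prems]])
  then show ?case by (simp add: mult.assoc)
qed

lemma pd_f: "pd (a + b) (\<lambda>t. (of_nat t + x1)^a * (of_nat t + x2)^b)"
proof -
  have "pd (0 + b) (\<lambda>t. (of_nat t + x2)^b * 1)" by (rule pd_pow[OF pd.pconst])
  then have "pd (b + a) (\<lambda>t. (of_nat t + x1)^a * ((of_nat t + x2)^b * 1))" by (intro pd_pow) simp
  then show ?thesis by (simp add: add.commute)
qed

lemma gs_E: "gen_stirling x1 x2 p2 p1 l = E (\<lambda>t. (of_nat t + x1)^p1 * (of_nat t + x2)^p2) l / of_nat (fact l)"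
  unfolding gen_stirling_def E_def by (simp add: atLeast0AtMost mult.assoc)

lemma B_Tw: "bipoly_bernoulli k a b x1 x2 = Tw (W k 0) (\<lambda>t. (of_nat t + x1)^a * (of_nat t + x2)^b) (a+b)"
  unfolding bipoly_bernoulli_def Tw_def W_0 gs_E atLeast0AtMost
  by (intro sum.cong refl) (simp add: field_simps)

lemma binom_fun: "(\<Sum>l=0..q. of_nat (q choose l) * (-x)^(q-l) * ((y+x)^(a+l) * z)) = y^q * ((y+x)^a * z)"
  for x y z :: complex
proof -
  have "y^q = ((y+x) + -x)^q" by simp
  also have "\<dots> = (\<Sum>l\<le>q. of_nat (q choose l) * (y+x)^l * (-x)^(q-l))" by (rule binomial_ring)
  finally have "y^q * ((y+x)^a * z) = (\<Sum>l\<le>q. of_nat (q choose l) * (y+x)^l * (-x)^(q-l) * ((y+x)^a * z))"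
    by (simp add: sum_distrib_right)
  also have "\<dots> = (\<Sum>l=0..q. of_nat (q choose l) * (-x)^(q-l) * ((y+x)^(a+l) * z))"
    unfolding atLeast0AtMost by (intro sum.cong refl) (simp add: power_add mult_ac)
  finally show ?thesis by simp
qed

lemma aux4: "(F::complex) \<noteq> 0 \<Longrightarrow> a * s * (- r / p) = - (a / F * (s * F * r / p))"
  by (simp add: field_simps)

theorem proposition4p2:
  fixes p1 p2 q :: nat and k :: int and x1 x2 :: complex
  shows "(\<Sum>l=0..q. of_nat (q choose l) * (-x1)^(q - l) * bipoly_bernoulli k (p1 + l) p2 x1 x2)
           = (\<Sum>l=0..q. of_nat (q choose l) * (-x2)^(q - l) * bipoly_bernoulli k p1 (p2 + l) x1 x2)
       \<and> (\<Sum>l=0..q. of_nat (q choose l) * (-x2)^(q - l) * bipoly_bernoulli k p1 (p2 + l) x1 x2)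
           = - (\<Sum>l=0..p1+p2. gen_stirling x1 x2 p2 p1 l *
                 ((-1)^l * of_nat (fact l) * Rfun k q (of_nat l)
                  / (\<Prod>i=1..q+1. of_nat (l + i)) powi k))"
proof -
  define N where "N = p1 + p2 + q"
  define f where "f = (\<lambda>t. (of_nat t + x1)^p1 * (of_nat t + x2)^p2 :: complex)"
  have S1: "(\<Sum>l=0..q. of_nat (q choose l) * (-x1)^(q - l) * bipoly_bernoulli k (p1 + l) p2 x1 x2)
      = Tw (W k 0) (\<lambda>t. of_nat t ^ q * f t) N"
  proof -
    have "(\<Sum>l=0..q. of_nat (q choose l) * (-x1)^(q - l) * bipoly_bernoulli k (p1 + l) p2 x1 x2)
       = (\<Sum>l=0..q. of_nat (q choose l) * (-x1)^(q - l) * Tw (W k 0) (\<lambda>t. (of_nat t + x1)^(p1+l) * (of_nat t + x2)^p2) N)"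
    proof (intro sum.cong refl)
      fix l assume "l \<in> {0..q}"
      then have "N = (p1 + l + p2) + (q - l)" by (auto simp: N_def)
      then show "of_nat (q choose l) * (-x1)^(q - l) * bipoly_bernoulli k (p1 + l) p2 x1 x2 =
          of_nat (q choose l) * (-x1)^(q - l) * Tw (W k 0) (\<lambda>t. (of_nat t + x1)^(p1+l) * (of_nat t + x2)^p2) N"
        using Tw_ext[OF pd_f[of "p1+l" p2 x1 x2], of "p1+l+p2" "W k 0" "q-l"] by (simp add: B_Tw)
    qed
    also have "\<dots> = Tw (W k 0) (\<lambda>t. \<Sum>l=0..q. (of_nat (q choose l) * (-x1)^(q - l)) * ((of_nat t + x1)^(p1+l) * (of_nat t + x2)^p2)) N"
      by (rule Tw_sum[symmetric]) simp
    also have "\<dots> = Tw (W k 0) (\<lambda>t. of_nat t ^ q * f t) N"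
      unfolding f_def using binom_fun[of q x1 _ p1] by simp
    finally show ?thesis .
  qed
  have S2: "(\<Sum>l=0..q. of_nat (q choose l) * (-x2)^(q - l) * bipoly_bernoulli k p1 (p2 + l) x1 x2)
      = Tw (W k 0) (\<lambda>t. of_nat t ^ q * f t) N"
  proof -
    have "(\<Sum>l=0..q. of_nat (q choose l) * (-x2)^(q - l) * bipoly_bernoulli k p1 (p2 + l) x1 x2)
       = (\<Sum>l=0..q. of_nat (q choose l) * (-x2)^(q - l) * Tw (W k 0) (\<lambda>t. (of_nat t + x1)^p1 * (of_nat t + x2)^(p2+l)) N)"
    proof (intro sum.cong refl)
      fix l assume "l \<in> {0..q}"
      then have "N = (p1 + (p2 + l)) + (q - l)" by (auto simp: N_def)
      then show "of_nat (q choose l) * (-x2)^(q - l) * bipoly_bernoulli k p1 (p2 + l) x1 x2 =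
          of_nat (q choose l) * (-x2)^(q - l) * Tw (W k 0) (\<lambda>t. (of_nat t + x1)^p1 * (of_nat t + x2)^(p2+l)) N"
        using Tw_ext[OF pd_f[of p1 "p2+l" x1 x2], of "p1+(p2+l)" "W k 0" "q-l"] by (simp add: B_Tw)
    qed
    also have "\<dots> = Tw (W k 0) (\<lambda>t. \<Sum>l=0..q. (of_nat (q choose l) * (-x2)^(q - l)) * ((of_nat t + x2)^(p2+l) * (of_nat t + x1)^p1)) N"
      by (subst Tw_sum) (simp_all add: mult_ac)
    also have "\<dots> = Tw (W k 0) (\<lambda>t. of_nat t ^ q * f t) N"
      unfolding f_def binom_fun by (simp add: mult.commute)
    finally show ?thesis .
  qed
  have S3: "Tw (W k 0) (\<lambda>t. of_nat t ^ q * f t) N = Tw (W k q) f (p1 + p2)"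
  proof -
    have "Tw (W k 0) (\<lambda>t. of_nat t ^ q * f t) N = Tw (W k q) f N"
      unfolding f_def by (rule key[OF pd_f]) (simp add: N_def)
    also have "\<dots> = Tw (W k q) f (p1 + p2)"
      unfolding f_def N_def by (rule Tw_ext[OF pd_f, symmetric]) simp
    finally show ?thesis .
  qed
  have S4: "Tw (W k q) f (p1 + p2) = - (\<Sum>l=0..p1+p2. gen_stirling x1 x2 p2 p1 l *
                 ((-1)^l * of_nat (fact l) * Rfun k q (of_nat l)
                  / (\<Prod>i=1..q+1. of_nat (l + i)) powi k))"
    unfolding Tw_def W_def gs_E f_def[symmetric] atLeast0AtMost sum_negf[symmetric]
    by (intro sum.cong refl aux4) simp
  show ?thesis using S1 S2 S3 S4 by simp
qed

end
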